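(* Let $\mathcal{G}^{c}=(\mathbb{C},\mathbb{E}^{c})$ be a C-DMG over DMGs, let $\mathbb{C}_X,\mathbb{C}_Y,\mathbb{C}_W$ be pairwise disjoint subsets of $\mathbb{C}$, and set $X=\bigcup_{C\in\mathbb{C}_X}C$, $Y=\bigcup_{C\in\mathbb{C}_Y}C$, $W=\bigcup_{C\in\mathbb{C}_W}C$. If $\mathbb{C}_X$ and $\mathbb{C}_Y$ are not $\sigma$-separated by $\mathbb{C}_W$ in $\mathcal{G}^{c}$, then there exists a DMG $\mathcal{G}=(\mathbb{V},\mathbb{E})$ compatible with $\mathcal{G}^{c}$ in which $X$ and $Y$ are not $\sigma$-separated by $W$.
   Context: A directed mixed graph (DMG) $\mathcal{G}=(\mathbb{V},\mathbb{E})$ has directed edges $\to$ and bidirected edges $\leftrightarrow$, cycles allowed; the DMGs considered are those induced by input/output structural causal models (ioSCMs, Forré–Mooij 2020): vertices are the endogenous and input variables, $U\to V$ if $U$ is an argument of the causal mechanism of $V$, and $U\leftrightarrow V$ if some latent variable is a parent of both. A C-DMG over DMGs $\mathcal{G}^c=(\mathbb{C},\mathbb{E}^c)$ is obtained from such a DMG $\mathcal{G}=(\mathbb{V},\mathbb{E})$ as follows: $\mathbb{C}$ is a partition of $\mathbb{V}$ into nonempty clusters, and for all $C_i,C_j\in\mathbb{C}$ (possibly equal) the edge $C_i\to C_j$ (resp. $C_i\leftrightarrow C_j$) is in $\mathbb{E}^c$ iff there exist $V_i\in C_i,V_j\in C_j$ with $V_i\to V_j$ (resp. $V_i\leftrightarrow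 V_j$) in $\mathbb{E}$; such $\mathcal{G}$ is called compatible with $\mathcal{G}^c$. In any such graph, ancestors and descendants include the vertex itself, and the strongly connected component of $V$ is $\mathrm{Sc}(V)=\mathrm{Anc}(V)\cap\mathrm{Desc}(V)$. Write $A\mathbin{*\!\!\to} B$ for an edge $A\to B$ or $A\leftrightarrow B$, and $A\mathbin{\leftarrow\!\!*} B$ for $A\leftarrow B$ or $A\leftrightarrow B$. A walk $\langle V_1,\dots,V_n\rangle$ is $\sigma$-blocked by a set $W$ if: (1) $V_1\in W$ or $V_n\in W$; or (2) for some $1<i<n$, $V_{i-1}\mathbin{*\!\!\to}V_i\mathbin{\leftarrow\!\!*}V_{i+1}$ on the walk and $V_i\notin W$; or (3) for some $1<i<n$, $V_{i-1}\leftarrow V_i\mathbin{\leftarrow\!\!*}V_{i+1}$ on the walk and $V_i\in W\setminus \mathrm{Sc}(V_{i-1})$; or (4) for some $1<i<n$, $V_{i-1}\mathbin{*\!\!\to}V_i\to V_{i+1}$ on the walk and $V_i\in W\setminus\mathrm{Sc}(V_{i+1})$; or (5) for some $1<i<n$, $V_{i-1}\leftarrow V_i\to V_{i+1}$ on the walk and $V_i\in W\setminus(\mathrm{Sc}(V_{i-1})\cap\mathrm{Sc}(V_{i+1}))$. For disjoint vertex sets $X,Y,W$, $W$ $\sigma$-separates $X$ and $Y$ if every walk from a vertex of $X$ to a vertex of $Y$ is $\sigma$-blocked by $W$. *)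

theory Defs
  imports Main "HOL-Library.Disjoint_Sets"
begin

text \<open>A graph is given by a vertex set V, a set D of directed edges
  ((a,b) \<in> D means a \<rightarrow> b) and a set B of bidirected edges ((a,b) \<in> B means a \<leftrightarrow> b).\<close>

definition ioscm_dmg :: "'v set \<Rightarrow> ('v \<times> 'v) set \<Rightarrow> ('v \<times> 'v) set \<Rightarrow> bool" where
  "ioscm_dmg V D B \<longleftrightarrow> finite V \<and> D \<subseteq> V \<times> V \<and> B \<subseteq> V \<times> V \<and>
     irrefl D \<and> irrefl B \<and> sym B"

definition compatible ::
  "'v set \<Rightarrow> ('v \<times> 'v) set \<Rightarrow> ('v \<times> 'v) set \<Rightarrow>
   'v set set \<Rightarrow> ('v set \<times> 'v set) set \<Rightarrow> ('v set \<times> 'v set) set \<Rightarrow> bool" where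
  "compatible V D B C DC BC \<longleftrightarrow> partition_on V C \<and>
     DC = {(Ci, Cj). Ci \<in> C \<and> Cj \<in> C \<and> (\<exists>a\<in>Ci. \<exists>b\<in>Cj. (a, b) \<in> D)} \<and>
     BC = {(Ci, Cj). Ci \<in> C \<and> Cj \<in> C \<and> (\<exists>a\<in>Ci. \<exists>b\<in>Cj. (a, b) \<in> B)}"

definition is_cdmg :: "'v set set \<Rightarrow> ('v set \<times> 'v set) set \<Rightarrow> ('v set \<times> 'v set) set \<Rightarrow> bool" where
  "is_cdmg C DC BC \<longleftrightarrow> (\<exists>V D B. ioscm_dmg V D B \<and> compatible V D B C DC BC)"

datatype mark = Fwd | Bwd | Bid

definition edge_ok :: "('v \<times> 'v) set \<Rightarrow> ('v \<times> 'v) set \<Rightarrow> 'v \<Rightarrow> mark \<Rightarrow> 'v \<Rightarrow> bool" where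
  "edge_ok D B u m v = (case m of Fwd \<Rightarrow> (u, v) \<in> D | Bwd \<Rightarrow> (v, u) \<in> D | Bid \<Rightarrow> (u, v) \<in> B)"

definition is_walk :: "'v set \<Rightarrow> ('v \<times> 'v) set \<Rightarrow> ('v \<times> 'v) set \<Rightarrow> 'v list \<Rightarrow> mark list \<Rightarrow> bool" where
  "is_walk V D B vs es \<longleftrightarrow> vs \<noteq> [] \<and> set vs \<subseteq> V \<and> length es = length vs - 1 \<and>
     (\<forall>i < length es. edge_ok D B (vs ! i) (es ! i) (vs ! Suc i))"

definition anc :: "('v \<times> 'v) set \<Rightarrow> 'v \<Rightarrow> 'v set" where
  "anc D v = {u. (u, v) \<in> D\<^sup>*}"

definition desc :: "('v \<times> 'v) set \<Rightarrow> 'v \<Rightarrow> 'v set" where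
  "desc D v = {u. (v, u) \<in> D\<^sup>*}"

definition sc :: "('v \<times> 'v) set \<Rightarrow> 'v \<Rightarrow> 'v set" where
  "sc D v = anc D v \<inter> desc D v"

definition head_left :: "mark \<Rightarrow> bool" where "head_left m \<longleftrightarrow> m = Fwd \<or> m = Bid"
  \<comment> \<open>edge to the left of a vertex has an arrowhead at that vertex\<close>
definition head_right :: "mark \<Rightarrow> bool" where "head_right m \<longleftrightarrow> m = Bwd \<or> m = Bid"
  \<comment> \<open>edge to the right of a vertex has an arrowhead at that vertex\<close>

definition sigma_blocked :: "('v \<times> 'v) set \<Rightarrow> 'v list \<Rightarrow> mark list \<Rightarrow> 'v set \<Rightarrow> bool" where
  "sigma_blocked D vs es W \<longleftrightarrow>
     hd vs \<in> W \<or> last vs \<in> W \<or>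
     (\<exists>i. 0 < i \<and> i < length vs - 1 \<and>
        ((head_left (es ! (i - 1)) \<and> head_right (es ! i) \<and> vs ! i \<notin> W) \<or>
         (es ! (i - 1) = Bwd \<and> head_right (es ! i) \<and>
            vs ! i \<in> W - sc D (vs ! (i - 1))) \<or>
         (head_left (es ! (i - 1)) \<and> es ! i = Fwd \<and>
            vs ! i \<in> W - sc D (vs ! Suc i)) \<or>
         (es ! (i - 1) = Bwd \<and> es ! i = Fwd \<and>
            vs ! i \<in> W - (sc D (vs ! (i - 1)) \<inter> sc D (vs ! Suc i)))))"

definition sigma_separated ::
  "'v set \<Rightarrow> ('v \<times> 'v) set \<Rightarrow> ('v \<times> 'v) set \<Rightarrow> 'v set \<Rightarrow> 'v set \<Rightarrow> 'v set \<Rightarrow> bool" where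
  "sigma_separated V D B X Y W \<longleftrightarrow>
     (\<forall>vs es. is_walk V D B vs es \<and> hd vs \<in> X \<and> last vs \<in> Y \<longrightarrow> sigma_blocked D vs es W)"

end

theory Submission
  imports Defs
begin

lemma part_eq:
  assumes "partition_on V C" "A \<in> C" "B \<in> C" "x \<in> A" "x \<in> B"
  shows "A = B"
  using partition_onD2[OF assms(1)] assms(2-5) by (auto simp: disjoint_def)

lemma lift_trancl:
  assumes part: "partition_on V C" and DCsub: "DC \<subseteq> C \<times> C"
    and Dd: "D = {(a,b). a \<noteq> b \<and> (\<exists>Ci Cj. (Ci,Cj) \<in> DC \<and> a \<in> Ci \<and> b \<in> Cj)}"
    and tr: "(Ca,Cb) \<in> DC\<^sup>+"
  shows "\<forall>a\<in>Ca. \<forall>b\<in>Cb. (a,b) \<in> D\<^sup>*"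
  using tr
proof (induction rule: trancl_induct)
  case (base y)
  show ?case
  proof (intro ballI)
    fix a b assume "a \<in> Ca" "b \<in> y"
    show "(a,b) \<in> D\<^sup>*"
    proof (cases "a = b")
      case True then show ?thesis by simp
    next
      case False
      then have "(a,b) \<in> D" using base \<open>a \<in> Ca\<close> \<open>b \<in> y\<close> Dd by blast
      then show ?thesis by blast
    qed
  qed
next
  case (step y z)
  show ?case
  proof (intro ballI)
    fix a b assume a: "a \<in> Ca" and b: "b \<in> z"
    show "(a,b) \<in> D\<^sup>*"
    proof (cases "y = z")
      case True then show ?thesis using step.IH a b by blast
    next
      case False
      have yC: "y \<in> C" "z \<in> C" using step.hyps(2) DCsub by auto
      then have "y \<noteq> {}" using partition_onD3[OF part] by auto
      then obtain m where m: "m \<in> y" by blast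
      have "m \<noteq> b" using part_eq[OF part yC] m b False by blast
      then have "(m,b) \<in> D" using step.hyps(2) m b Dd by blast
      moreover have "(a,m) \<in> D\<^sup>*" using step.IH a m by blast
      ultimately show ?thesis by (meson rtrancl_into_rtrancl)
    qed
  qed
qed

lemma sc_iff: "b \<in> sc D a \<longleftrightarrow> (b,a) \<in> D\<^sup>* \<and> (a,b) \<in> D\<^sup>*"
  by (simp add: sc_def anc_def desc_def)

theorem theorem2:
  fixes C :: "'v set set"
    and DC BC :: "('v set \<times> 'v set) set"
    and CX CY CW :: "'v set set"
  assumes "is_cdmg C DC BC"
    and "CX \<subseteq> C" and "CY \<subseteq> C" and "CW \<subseteq> C"
    and "CX \<inter> CY = {}" and "CX \<inter> CW = {}" and "CY \<inter> CW = {}"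
    and "\<not> sigma_separated C DC BC CX CY CW"
  shows "\<exists>V D B. ioscm_dmg V D B \<and> compatible V D B C DC BC \<and>
           \<not> sigma_separated V D B (\<Union>CX) (\<Union>CY) (\<Union>CW)"
proof -
  obtain V0 D0 B0 where io: "ioscm_dmg V0 D0 B0" and cp: "compatible V0 D0 B0 C DC BC"
    using assms(1) unfolding is_cdmg_def by blast
  have part: "partition_on V0 C" using cp by (simp add: compatible_def)
  have DCe: "DC = {(Ci, Cj). Ci \<in> C \<and> Cj \<in> C \<and> (\<exists>a\<in>Ci. \<exists>b\<in>Cj. (a, b) \<in> D0)}"
   and BCe: "BC = {(Ci, Cj). Ci \<in> C \<and> Cj \<in> C \<and> (\<exists>a\<in>Ci. \<exists>b\<in>Cj. (a, b) \<in> B0)}"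
    using cp by (simp_all add: compatible_def)
  have fin: "finite V0" and irD: "irrefl D0" and irB: "irrefl B0" and syB: "sym B0"
    using io by (simp_all add: ioscm_dmg_def)
  have V0e: "V0 = \<Union>C" using partition_onD1[OF part] .
  have ne: "\<And>X. X \<in> C \<Longrightarrow> X \<noteq> {}" using partition_onD3[OF part] by auto
  have DCsub: "DC \<subseteq> C \<times> C" using DCe by auto
  have BCsub: "BC \<subseteq> C \<times> C" using BCe by auto
  have BCsym: "\<And>X Y. (X,Y) \<in> BC \<Longrightarrow> (Y,X) \<in> BC"
    using syB unfolding BCe by (auto simp: sym_def)
  have two: "\<And>X. (X,X) \<in> DC \<or> (X,X) \<in> BC \<Longrightarrow> \<exists>x y. x \<in> X \<and> y \<in> X \<and> x \<noteq> y"
  proof -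
    fix X assume "(X,X) \<in> DC \<or> (X,X) \<in> BC"
    then obtain a b where "a \<in> X" "b \<in> X" "(a,b) \<in> D0 \<or> (a,b) \<in> B0"
      unfolding DCe BCe by blast
    moreover have "a \<noteq> b" using calculation irD irB by (auto simp: irrefl_def)
    ultimately show "\<exists>x y. x \<in> X \<and> y \<in> X \<and> x \<noteq> y" by blast
  qed
  define D' where "D' = {(a,b). a \<noteq> b \<and> (\<exists>Ci Cj. (Ci,Cj) \<in> DC \<and> a \<in> Ci \<and> b \<in> Cj)}"
  define B' where "B' = {(a,b). a \<noteq> b \<and> (\<exists>Ci Cj. (Ci,Cj) \<in> BC \<and> a \<in> Ci \<and> b \<in> Cj)}"
  have io': "ioscm_dmg V0 D' B'"
    unfolding ioscm_dmg_def
  proof (intro conjI)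
    show "finite V0" by (rule fin)
    show "D' \<subseteq> V0 \<times> V0" using DCsub V0e unfolding D'_def by blast
    show "B' \<subseteq> V0 \<times> V0" using BCsub V0e unfolding B'_def by blast
    show "irrefl D'" unfolding D'_def irrefl_def by blast
    show "irrefl B'" unfolding B'_def irrefl_def by blast
    show "sym B'" unfolding B'_def sym_def using BCsym by blast
  qed
  have cp': "compatible V0 D' B' C DC BC"
    unfolding compatible_def
  proof (intro conjI)
    show "partition_on V0 C" by (rule part)
    show "DC = {(Ci, Cj). Ci \<in> C \<and> Cj \<in> C \<and> (\<exists>a\<in>Ci. \<exists>b\<in>Cj. (a, b) \<in> D')}"
    proof (intro set_eqI iffI)
      fix P assume P: "P \<in> DC"
      obtain Ci Cj where Pe: "P = (Ci,Cj)" by (cases P)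
      with P obtain a b where "Ci \<in> C" "Cj \<in> C" "a \<in> Ci" "b \<in> Cj" "(a,b) \<in> D0"
        unfolding DCe by blast
      moreover have "a \<noteq> b" using calculation irD by (auto simp: irrefl_def)
      ultimately show "P \<in> {(Ci, Cj). Ci \<in> C \<and> Cj \<in> C \<and> (\<exists>a\<in>Ci. \<exists>b\<in>Cj. (a, b) \<in> D')}"
        using P Pe unfolding D'_def by blast
    next
      fix P assume "P \<in> {(Ci, Cj). Ci \<in> C \<and> Cj \<in> C \<and> (\<exists>a\<in>Ci. \<exists>b\<in>Cj. (a, b) \<in> D')}"
      then obtain Ci Cj a b Ci' Cj' where "P = (Ci,Cj)" "Ci \<in> C" "Cj \<in> C" "a \<in> Ci" "b \<in> Cj"
        "(Ci',Cj') \<in> DC" "a \<in> Ci'" "b \<in> Cj'" unfolding D'_def by blast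
      moreover have "Ci' \<in> C" "Cj' \<in> C" using calculation DCsub by auto
      ultimately show "P \<in> DC" using part_eq[OF part] by metis
    qed
    show "BC = {(Ci, Cj). Ci \<in> C \<and> Cj \<in> C \<and> (\<exists>a\<in>Ci. \<exists>b\<in>Cj. (a, b) \<in> B')}"
    proof (intro set_eqI iffI)
      fix P assume P: "P \<in> BC"
      obtain Ci Cj where Pe: "P = (Ci,Cj)" by (cases P)
      with P obtain a b where "Ci \<in> C" "Cj \<in> C" "a \<in> Ci" "b \<in> Cj" "(a,b) \<in> B0"
        unfolding BCe by blast
      moreover have "a \<noteq> b" using calculation irB by (auto simp: irrefl_def)
      ultimately show "P \<in> {(Ci, Cj). Ci \<in> C \<and> Cj \<in> C \<and> (\<exists>a\<in>Ci. \<exists>b\<in>Cj. (a, b) \<in> B')}"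
        using P Pe unfolding B'_def by blast
    next
      fix P assume "P \<in> {(Ci, Cj). Ci \<in> C \<and> Cj \<in> C \<and> (\<exists>a\<in>Ci. \<exists>b\<in>Cj. (a, b) \<in> B')}"
      then obtain Ci Cj a b Ci' Cj' where "P = (Ci,Cj)" "Ci \<in> C" "Cj \<in> C" "a \<in> Ci" "b \<in> Cj"
        "(Ci',Cj') \<in> BC" "a \<in> Ci'" "b \<in> Cj'" unfolding B'_def by blast
      moreover have "Ci' \<in> C" "Cj' \<in> C" using calculation BCsub by auto
      ultimately show "P \<in> BC" using part_eq[OF part] by metis
    qed
  qed

  obtain cs es where wk: "is_walk C DC BC cs es" and hX: "hd cs \<in> CX" and lY: "last cs \<in> CY"
    and nb: "\<not> sigma_blocked DC cs es CW"
    using assms(8) unfolding sigma_separated_def by blast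
  define n where "n = length cs"
  have csne: "cs \<noteq> []" and csC: "set cs \<subseteq> C" and les: "length es = n - 1"
    and eok: "\<And>i. i < length es \<Longrightarrow> edge_ok DC BC (cs ! i) (es ! i) (cs ! Suc i)"
    using wk unfolding is_walk_def n_def by auto
  have npos: "0 < n" using csne n_def by simp
  have csiC: "\<And>i. i < n \<Longrightarrow> cs ! i \<in> C" using csC n_def by auto
  define p where "p = (\<lambda>X::'v set. SOME x. x \<in> X)"
  define q where "q = (\<lambda>X. if \<exists>y\<in>X. y \<noteq> p X then SOME y. y \<in> X \<and> y \<noteq> p X else p X)"
  define lf where "lf = (\<lambda>(i::nat) (X::'v set). if even i then p X else q X)"
  have pin: "\<And>X. X \<noteq> {} \<Longrightarrow> p X \<in> X" unfolding p_def by (simp add: some_in_eq)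
  have qin: "\<And>X. X \<noteq> {} \<Longrightarrow> q X \<in> X"
  proof -
    fix X :: "'v set" assume "X \<noteq> {}"
    show "q X \<in> X"
    proof (cases "\<exists>y\<in>X. y \<noteq> p X")
      case True
      then have "\<exists>y. y \<in> X \<and> y \<noteq> p X" by blast
      then have "(SOME y. y \<in> X \<and> y \<noteq> p X) \<in> X" by (metis (mono_tags, lifting) someI_ex)
      then show ?thesis using True unfolding q_def by simp
    next
      case False then show ?thesis unfolding q_def using pin \<open>X \<noteq> {}\<close> by simp
    qed
  qed
  have pq: "\<And>X. \<exists>x y. x \<in> X \<and> y \<in> X \<and> x \<noteq> y \<Longrightarrow> q X \<noteq> p X"
  proof -
    fix X :: "'v set" assume "\<exists>x y. x \<in> X \<and> y \<in> X \<and> x \<noteq> y"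
    then have T: "\<exists>y\<in>X. y \<noteq> p X" by metis
    then have "\<exists>y. y \<in> X \<and> y \<noteq> p X" by blast
    then have "(SOME y. y \<in> X \<and> y \<noteq> p X) \<noteq> p X" by (metis (mono_tags, lifting) someI_ex)
    then show "q X \<noteq> p X" using T unfolding q_def by simp
  qed
  define vs where "vs = map (\<lambda>i. lf i (cs ! i)) [0..<n]"
  have lvs: "length vs = n" unfolding vs_def by simp
  have vsi: "\<And>i. i < n \<Longrightarrow> vs ! i = lf i (cs ! i)" unfolding vs_def by simp
  have vmem: "\<And>i. i < n \<Longrightarrow> vs ! i \<in> cs ! i"
    using vsi csiC ne pin qin unfolding lf_def by auto
  have vW: "\<And>i. i < n \<Longrightarrow> (vs ! i \<in> \<Union>CW) = (cs ! i \<in> CW)"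
  proof -
    fix i assume i: "i < n"
    show "(vs ! i \<in> \<Union>CW) = (cs ! i \<in> CW)"
    proof
      assume "vs ! i \<in> \<Union>CW"
      then obtain X where "X \<in> CW" "vs ! i \<in> X" by blast
      then show "cs ! i \<in> CW" using part_eq[OF part, of X "cs ! i" "vs ! i"] assms(4) csiC[OF i] vmem[OF i] by auto
    next
      assume "cs ! i \<in> CW" then show "vs ! i \<in> \<Union>CW" using vmem[OF i] by blast
    qed
  qed
  have K: "\<And>j k. j < n \<Longrightarrow> k < n \<Longrightarrow> (cs ! j, cs ! k) \<in> DC \<or> (cs ! k, cs ! j) \<in> DC \<Longrightarrow>
      cs ! k \<in> sc DC (cs ! j) \<Longrightarrow> vs ! k \<in> sc D' (vs ! j)"
  proof -
    fix j k assume j: "j < n" and k: "k < n" and ed: "(cs ! j, cs ! k) \<in> DC \<or> (cs ! k, cs ! j) \<in> DC"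
      and s: "cs ! k \<in> sc DC (cs ! j)"
    have "(cs ! j, cs ! k) \<in> DC\<^sup>+ \<and> (cs ! k, cs ! j) \<in> DC\<^sup>+"
    proof (cases "cs ! j = cs ! k")
      case True then show ?thesis using ed by auto
    next
      case False then show ?thesis using s unfolding sc_iff by (metis rtranclD)
    qed
    then show "vs ! k \<in> sc D' (vs ! j)" unfolding sc_iff
      using lift_trancl[OF part DCsub D'_def] vmem[OF j] vmem[OF k] by blast
  qed
  have vedge: "\<And>i. i < length es \<Longrightarrow> edge_ok D' B' (vs ! i) (es ! i) (vs ! Suc i)"
  proof -
    fix i assume i: "i < length es"
    then have i1: "i < n" and i2: "Suc i < n" using les by auto
    have e: "edge_ok DC BC (cs ! i) (es ! i) (cs ! Suc i)" using eok[OF i] .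
    have neq: "vs ! i \<noteq> vs ! Suc i"
    proof (cases "cs ! i = cs ! Suc i")
      case True
      have "(cs ! i, cs ! i) \<in> DC \<or> (cs ! i, cs ! i) \<in> BC"
        using e True by (cases "es ! i") (auto simp: edge_ok_def)
      then have "q (cs ! i) \<noteq> p (cs ! i)" using two pq by blast
      then show ?thesis using vsi[OF i1] vsi[OF i2] True unfolding lf_def by auto
    next
      case False
      then show ?thesis using part_eq[OF part csiC[OF i1] csiC[OF i2]] vmem[OF i1] vmem[OF i2] by metis
    qed
    show "edge_ok D' B' (vs ! i) (es ! i) (vs ! Suc i)"
      using e neq vmem[OF i1] vmem[OF i2]
      by (cases "es ! i") (auto simp: edge_ok_def D'_def B'_def)
  qed
  have walk': "is_walk V0 D' B' vs es"
    unfolding is_walk_def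
  proof (intro conjI allI impI)
    show "vs \<noteq> []" using lvs npos by auto
    show "set vs \<subseteq> V0"
    proof
      fix v assume "v \<in> set vs"
      then obtain i where "i < n" "v = vs ! i" using lvs by (metis in_set_conv_nth)
      then show "v \<in> V0" using vmem csiC V0e by blast
    qed
    show "length es = length vs - 1" using les lvs by simp
    fix i assume "i < length es" then show "edge_ok D' B' (vs ! i) (es ! i) (vs ! Suc i)" by (rule vedge)
  qed
  have hdv: "hd vs = vs ! 0" using lvs npos by (metis hd_conv_nth less_numeral_extra(3) list.size(3))
  have lastv: "last vs = vs ! (n - 1)" using lvs npos by (metis last_conv_nth less_numeral_extra(3) list.size(3))
  have hdc: "hd cs = cs ! 0" using csne by (simp add: hd_conv_nth)
  have lastc: "last cs = cs ! (n - 1)" using csne n_def by (simp add: last_conv_nth)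
  have nb': "\<not> sigma_blocked D' vs es (\<Union>CW)"
  proof
    assume "sigma_blocked D' vs es (\<Union>CW)"
    then consider (h) "hd vs \<in> \<Union>CW" | (l) "last vs \<in> \<Union>CW" |
      (m) i where "0 < i" "i < length vs - 1" and
        "(head_left (es ! (i - 1)) \<and> head_right (es ! i) \<and> vs ! i \<notin> \<Union>CW) \<or>
         (es ! (i - 1) = Bwd \<and> head_right (es ! i) \<and>
            vs ! i \<in> \<Union>CW - sc D' (vs ! (i - 1))) \<or>
         (head_left (es ! (i - 1)) \<and> es ! i = Fwd \<and>
            vs ! i \<in> \<Union>CW - sc D' (vs ! Suc i)) \<or>
         (es ! (i - 1) = Bwd \<and> es ! i = Fwd \<and>
            vs ! i \<in> \<Union>CW - (sc D' (vs ! (i - 1)) \<inter> sc D' (vs ! Suc i)))"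
      unfolding sigma_blocked_def by blast
    then show False
    proof cases
      case h then show False using nb vW[OF npos] hdv hdc unfolding sigma_blocked_def by auto
    next
      case l then show False using nb vW[of "n - 1"] npos lastv lastc unfolding sigma_blocked_def by auto
    next
      case (m i)
      have i0: "i - 1 < n" and i1: "i < n" and i2: "Suc i < n" using m lvs by auto
      have ie1: "i - 1 < length es" and ie2: "i < length es" using m lvs les by auto
      have e1: "edge_ok DC BC (cs ! (i - 1)) (es ! (i - 1)) (cs ! i)"
        using eok[OF ie1] m(1) by simp
      have e2: "edge_ok DC BC (cs ! i) (es ! i) (cs ! Suc i)" using eok[OF ie2] .
      have K1: "es ! (i - 1) = Bwd \<Longrightarrow> cs ! i \<in> sc DC (cs ! (i - 1)) \<Longrightarrow> vs ! i \<in> sc D' (vs ! (i - 1))"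
        using K[OF i0 i1] e1 by (auto simp: edge_ok_def)
      have K2: "es ! i = Fwd \<Longrightarrow> cs ! i \<in> sc DC (cs ! Suc i) \<Longrightarrow> vs ! i \<in> sc D' (vs ! Suc i)"
        using K[OF i2 i1] e2 by (auto simp: edge_ok_def)
      have "(head_left (es ! (i - 1)) \<and> head_right (es ! i) \<and> cs ! i \<notin> CW) \<or>
         (es ! (i - 1) = Bwd \<and> head_right (es ! i) \<and>
            cs ! i \<in> CW - sc DC (cs ! (i - 1))) \<or>
         (head_left (es ! (i - 1)) \<and> es ! i = Fwd \<and>
            cs ! i \<in> CW - sc DC (cs ! Suc i)) \<or>
         (es ! (i - 1) = Bwd \<and> es ! i = Fwd \<and>
            cs ! i \<in> CW - (sc DC (cs ! (i - 1)) \<inter> sc DC (cs ! Suc i)))"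
        using m(3) vW[OF i1] K1 K2 by blast
      then show False using nb m(1,2) lvs n_def unfolding sigma_blocked_def by auto
    qed
  qed
  have "\<not> sigma_separated V0 D' B' (\<Union>CX) (\<Union>CY) (\<Union>CW)"
    unfolding sigma_separated_def
  proof
    assume A: "\<forall>vs es. is_walk V0 D' B' vs es \<and> hd vs \<in> \<Union>CX \<and> last vs \<in> \<Union>CY \<longrightarrow>
      sigma_blocked D' vs es (\<Union>CW)"
    have "hd vs \<in> \<Union>CX" using hdv hdc hX vmem[OF npos] by auto
    moreover have "last vs \<in> \<Union>CY" using lastv lastc lY vmem[of "n - 1"] npos by auto
    ultimately show False using A walk' nb' by blast
  qed
  then show ?thesis using io' cp' by blast
qed

end
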